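(* Let $\mathcal{B}_4$, $\pi_{\lambda,\mu}$ ($\lambda\neq0,\mu\in\mathbb{R}$), the group Fourier transform and the difference operators $\Delta_{x_i}$ be as in the context. Then for a suitable distribution $\kappa$ on $\mathcal{B}_4$ (e.g. $\kappa\in\mathcal{S}(\mathbb{R}^4)$), for $h$ (e.g. in $\mathcal{S}(\mathbb{R})$) and $u\in\mathbb{R}$, $$\begin{aligned}(\Delta_{x_4}\pi_{\lambda,\mu}(\kappa))h(u)={}& i\,\partial_\lambda\{\pi_{\lambda,\mu}(\kappa)h(u)\}-\Big(\frac{\mu}{2\lambda^2}+\frac{u^2}{2}\Big)\{\Delta_{x_2}\pi_{\lambda,\mu}(\kappa)h(u)\}+u\{\Delta_{x_3}\pi_{\lambda,\mu}(\kappa)h(u)\}\\&-\{\Delta_{x_3}\Delta_{x_1}\pi_{\lambda,\mu}(\kappa)h(u)\}+u\{\Delta_{x_2}\Delta_{x_1}\pi_{\lambda,\mu}(\kappa)h(u)\}-\frac12\{\Delta_{x_2}\Delta_{x_1}^2\pi_{\lambda,\mu}(\kappa)h(u)\}.\end{aligned}$$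
   Context: The Engel group $\mathcal{B}_4$ is $\mathbb{R}^4$ with the law $(x_1,x_2,x_3,x_4)\circ(y_1,y_2,y_3,y_4)=(x_1+y_1,x_2+y_2,x_3+y_3-x_1y_2,x_4+y_4+\frac12x_1^2y_2-x_1y_3)$ and Haar measure the Lebesgue measure. For $\lambda\neq0$, $\mu\in\mathbb{R}$, $\pi_{\lambda,\mu}(x)h(u)=\exp\big(i(-\frac{\mu}{2\lambda}x_2+\lambda x_4-\lambda x_3u+\frac{\lambda}{2}x_2u^2)\big)h(u+x_1)$ on $L^2(\mathbb{R})$. The group Fourier transform is $\hat\kappa(\pi_{\lambda,\mu})=\pi_{\lambda,\mu}(\kappa)=\int_{\mathcal{B}_4}\kappa(x)\pi_{\lambda,\mu}(x)^*dx$; explicitly $\pi_{\lambda,\mu}(\kappa)h(u)=\int_{\mathbb{R}^4}\kappa(x)\exp\big(i(\frac{\mu}{2\lambda}x_2-\lambda x_4+\lambda x_3(u-x_1)-\frac{\lambda}{2}x_2(u-x_1)^2)\big)h(u-x_1)\,dx$. The difference operators are defined by $\Delta_{x_i}\hat\kappa(\pi_{\lambda,\mu}):=\pi_{\lambda,\mu}(x_i\kappa)$, $i=1,\dots,4$, where $x_i\kappa$ is $\kappa$ multiplied by the coordinate $x_i$; compositions act as $\Delta_{x_i}\Delta_{x_j}\pi_{\lambda,\mu}(\kappa)=\pi_{\lambda,\mu}(x_ix_j\kappa)$ and $\Delta_{x_1}^2\pi_{\lambda,\mu}(\kappa)=\pi_{\lambda,\mu}(x_1^2\kappa)$. $\partial_\lambda\{\pi_{\lambda,\mu}(\kappa)h(u)\}$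 is the derivative with respect to the parameter $\lambda$ of the function $\pi_{\lambda,\mu}(\kappa)h(u)$, and the factors $u$, $u^2$ act by multiplication after applying the operators. *)

theory Defs
  imports "HOL-Analysis.Analysis"
begin

fun dirderiv :: "'a::real_normed_vector list \<Rightarrow> ('a \<Rightarrow> 'b::real_normed_vector) \<Rightarrow> 'a \<Rightarrow> 'b" where
  "dirderiv [] f = f"
| "dirderiv (v # vs) f = (\<lambda>x. frechet_derivative (dirderiv vs f) (at x) v)"

definition schwartz :: "('a::real_normed_vector \<Rightarrow> 'b::real_normed_vector) \<Rightarrow> bool" where
  "schwartz f \<longleftrightarrow>
     (\<forall>vs. (\<forall>x. dirderiv vs f differentiable (at x)) \<and>
           (\<forall>N::nat. bounded (range (\<lambda>x. ((1 + norm x) ^ N) *\<^sub>R dirderiv vs f x))))"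

text \<open>Points of B_4 = R^4 are represented as (x1,x2,x3,x4); Haar measure = lborel.
  piF lam mu kappa h u is pi_{lam,mu}(kappa) h (u), written out explicitly.\<close>
definition piF :: "real \<Rightarrow> real \<Rightarrow> (real \<times> real \<times> real \<times> real \<Rightarrow> complex)
                    \<Rightarrow> (real \<Rightarrow> complex) \<Rightarrow> real \<Rightarrow> complex" where
  "piF lam mu kappa h u =
     (LINT x|lborel. (case x of (x1, x2, x3, x4) \<Rightarrow>
        kappa x * exp (\<i> * complex_of_real (mu / (2 * lam) * x2 - lam * x4
              + lam * x3 * (u - x1) - lam / 2 * x2 * (u - x1)^2)) * h (u - x1)))"

definition c1 :: "real \<times> real \<times> real \<times> real \<Rightarrow> real" where "c1 x = fst x"
definition c2 :: "real \<times> real \<times> real \<times> real \<Rightarrow> real" where "c2 x = fst (snd x)"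
definition c3 :: "real \<times> real \<times> real \<times> real \<Rightarrow> real" where "c3 x = fst (snd (snd x))"
definition c4 :: "real \<times> real \<times> real \<times> real \<Rightarrow> real" where "c4 x = snd (snd (snd x))"

end

theory Submission imports Defs "HOL-Probability.Sinc_Integral" "HOL-Probability.Characteristic_Functions"
begin

lemma int_inv_sq: "integrable lborel (\<lambda>x::real. inverse (1 + x^2))"
  using integrable_inverse_1_plus_square unfolding set_integrable_def by simp

lemma int_prod_lborel:
  fixes f :: "'a::euclidean_space \<Rightarrow> real" and g :: "'b::euclidean_space \<Rightarrow> real"
  assumes f: "integrable lborel f" and g: "integrable lborel g"
  shows "integrable lborel (\<lambda>z::'a \<times> 'b. f (fst z) * g (snd z))"
proof -
  have [measurable]: "f \<in> borel_measurable borel" "g \<in> borel_measurable borel"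
    using f g by auto
  have "integrable (lborel \<Otimes>\<^sub>M lborel) (\<lambda>z::'a \<times> 'b. f (fst z) * g (snd z))"
  proof (rule lborel_pair.Fubini_integrable)
    show "(\<lambda>z::'a \<times> 'b. f (fst z) * g (snd z)) \<in> borel_measurable (lborel \<Otimes>\<^sub>M lborel)"
      by measurable
    have "(\<lambda>x. \<integral> y. norm (f (fst (x, y)) * g (snd (x, y))) \<partial>lborel) = (\<lambda>x. norm (f x) * (\<integral> y. norm (g y) \<partial>lborel))"
      by (simp add: abs_mult integral_mult_right_zero)
    then show "integrable lborel (\<lambda>x. \<integral> y. norm (f (fst (x, y)) * g (snd (x, y))) \<partial>lborel)"
      using f by simp
    show "AE x in lborel. integrable lborel (\<lambda>y. f (fst (x, y)) * g (snd (x, y)))"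
      using g by simp
  qed
  then show ?thesis by (simp add: lborel_prod)
qed

definition W :: "real \<times> real \<times> real \<times> real \<Rightarrow> real" where
  "W x = inverse (1 + (c1 x)^2) * (inverse (1 + (c2 x)^2) * (inverse (1 + (c3 x)^2) * inverse (1 + (c4 x)^2)))"

lemma int_W: "integrable lborel W"
proof -
  note i2 = int_prod_lborel[OF int_inv_sq int_inv_sq]
  note i3 = int_prod_lborel[OF int_inv_sq i2]
  note i4 = int_prod_lborel[OF int_inv_sq i3]
  show ?thesis unfolding W_def c1_def c2_def c3_def c4_def using i4 by simp
qed

lemma c_le:
  fixes x :: "real \<times> real \<times> real \<times> real"
  shows "\<bar>c1 x\<bar> \<le> norm x" "\<bar>c2 x\<bar> \<le> norm x" "\<bar>c3 x\<bar> \<le> norm x" "\<bar>c4 x\<bar> \<le> norm x"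
proof -
  obtain a b c d where x: "x = (a, b, c, d)" by (cases x) auto
  have 1: "norm a \<le> norm (a, p)" "norm p \<le> norm (a, p)" for a :: real and p :: "real \<times> real \<times> real"
    using norm_fst_le[of a p] norm_snd_le[of p a] by auto
  have 2: "norm b \<le> norm (b, p)" "norm p \<le> norm (b, p)" for b :: real and p :: "real \<times> real"
    using norm_fst_le[of b p] norm_snd_le[of p b] by auto
  have 3: "norm c \<le> norm (c, d)" "norm d \<le> norm (c, d)" for c d :: real
    using norm_fst_le[of c d] norm_snd_le[of d c] by auto
  show "\<bar>c1 x\<bar> \<le> norm x" unfolding c1_def x using 1(1)[of a "(b,c,d)"] by simp
  show "\<bar>c2 x\<bar> \<le> norm x" unfolding c2_def x using 1(2)[of "(b,c,d)" a] 2(1)[of b "(c,d)"] by simp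
  show "\<bar>c3 x\<bar> \<le> norm x" unfolding c3_def x using 1(2)[of "(b,c,d)" a] 2(2)[of "(c,d)" b] 3(1)[of c d] by simp
  show "\<bar>c4 x\<bar> \<le> norm x" unfolding c4_def x using 1(2)[of "(b,c,d)" a] 2(2)[of "(c,d)" b] 3(2)[of d c] by simp
qed

lemma W_ge: "1 \<le> W x * (1 + norm x)^8"
proof -
  let ?n = "1 + norm x"
  have le: "1 + t^2 \<le> ?n^2" if "\<bar>t\<bar> \<le> norm x" for t
  proof -
    have "t^2 \<le> (norm x)^2" using that by (metis abs_le_square_iff abs_norm_cancel)
    moreover have "0 \<le> norm x" by simp
    ultimately have "1 + t^2 \<le> 1 + (norm x)^2 + 2 * norm x" by linarith
    then show ?thesis by (simp add: power2_sum)
  qed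
  have pos: "0 < 1 + t^2" for t :: real by (simp add: add_pos_nonneg)
  define P where "P = (1 + (c1 x)^2) * ((1 + (c2 x)^2) * ((1 + (c3 x)^2) * (1 + (c4 x)^2)))"
  have Ppos: "0 < P" unfolding P_def using pos by (intro mult_pos_pos) auto
  have "P \<le> ?n^2 * (?n^2 * (?n^2 * ?n^2))" unfolding P_def
    using le[OF c_le(1)] le[OF c_le(2)] le[OF c_le(3)] le[OF c_le(4)] pos
    by (intro mult_mono) (auto intro: mult_nonneg_nonneg less_imp_le)
  also have "\<dots> = ?n^8" by (simp add: power_add[symmetric])
  finally have Ple: "P \<le> ?n^8" .
  have Wx: "W x = inverse P" by (simp add: W_def P_def inverse_mult_distrib)
  have "inverse P * ?n^8 = ?n^8 / P" by (simp add: field_simps)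
  also have "1 \<le> ?n^8 / P" using Ple Ppos by (simp add: le_divide_eq)
  finally show ?thesis unfolding Wx by simp
qed

lemma schwartz_cont:
  assumes "schwartz f" shows "continuous_on UNIV f"
proof -
  have "f differentiable (at x)" for x
    using assms unfolding schwartz_def by (metis dirderiv.simps(1))
  then show ?thesis
    by (simp add: continuous_at_imp_continuous_on differentiable_imp_continuous_within)
qed

lemma schwartz_meas:
  assumes "schwartz f" shows "f \<in> borel_measurable borel"
  using schwartz_cont[OF assms] by (rule borel_measurable_continuous_onI)

lemma schwartz_bound:
  assumes "schwartz f" shows "\<exists>B. \<forall>x. (1 + norm x)^N * norm (f x) \<le> B"
proof -
  have "bounded (range (\<lambda>x. ((1 + norm x) ^ N) *\<^sub>R f x))"
    using assms unfolding schwartz_def by (metis dirderiv.simps(1))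
  then obtain B where B: "\<And>x. norm (((1 + norm x) ^ N) *\<^sub>R f x) \<le> B"
    unfolding bounded_iff by auto
  have "norm (((1 + norm x) ^ N) *\<^sub>R f x) = (1 + norm x)^N * norm (f x)" for x
    by (simp add: add_nonneg_nonneg)
  then show ?thesis using B by metis
qed

lemma int_poly:
  fixes kappa :: "real \<times> real \<times> real \<times> real \<Rightarrow> complex"
    and g :: "real \<times> real \<times> real \<times> real \<Rightarrow> complex"
  assumes k: "schwartz kappa" and g: "g \<in> borel_measurable lborel"
    and bnd: "\<And>x. norm (g x) \<le> C * (1 + norm x)^3 * norm (kappa x)"
  shows "integrable lborel g"
proof -
  obtain B where B: "\<And>x. (1 + norm x)^11 * norm (kappa x) \<le> B"
    using schwartz_bound[OF k, of 11] by auto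
  have Wnn: "0 \<le> W x" for x unfolding W_def by (simp add: add_nonneg_nonneg)
  have k3: "(1 + norm x)^3 * norm (kappa x) \<le> B * W x" for x
  proof -
    have "(1 + norm x)^3 * norm (kappa x) \<le> (1 + norm x)^3 * norm (kappa x) * (W x * (1 + norm x)^8)"
      using mult_left_mono[OF W_ge[of x], of "(1 + norm x)^3 * norm (kappa x)"] by simp
    also have "\<dots> = ((1 + norm x)^11 * norm (kappa x)) * W x"
      by (simp add: algebra_simps power_add[symmetric])
    also have "\<dots> \<le> B * W x" using B[of x] Wnn[of x] by (rule mult_right_mono)
    finally show ?thesis .
  qed
  show ?thesis
  proof (rule Bochner_Integration.integrable_bound[where f="\<lambda>x. (\<bar>C\<bar> * B) * W x"])
    show "integrable lborel (\<lambda>x. (\<bar>C\<bar> * B) * W x)" using int_W by simp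
    show "g \<in> borel_measurable lborel" by fact
    show "AE x in lborel. norm (g x) \<le> norm (\<bar>C\<bar> * B * W x)"
    proof (rule AE_I2)
      fix x
      have "norm (g x) \<le> C * ((1 + norm x)^3 * norm (kappa x))" using bnd[of x] by (simp add: mult.assoc)
      also have "\<dots> \<le> \<bar>C\<bar> * ((1 + norm x)^3 * norm (kappa x))"
        by (intro mult_right_mono) auto
      also have "\<dots> \<le> \<bar>C\<bar> * (B * W x)" using k3[of x] by (intro mult_left_mono) auto
      also have "\<dots> \<le> norm (\<bar>C\<bar> * B * W x)" by (simp add: mult.assoc)
      finally show "norm (g x) \<le> norm (\<bar>C\<bar> * B * W x)" .
    qed
  qed
qed

lemma hvd_iff:
  fixes F :: "real \<Rightarrow> 'b::real_normed_vector"
  shows "(F has_vector_derivative D) (at a) \<longleftrightarrow> ((\<lambda>y. (F y - F a) /\<^sub>R (y - a)) \<longlongrightarrow> D) (at a)"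
proof -
  have bl: "bounded_linear (\<lambda>x::real. x *\<^sub>R D)" by (rule bounded_linear_scaleR_left)
  have ev: "\<forall>\<^sub>F y in at a. norm (F y - F a - (y - a) *\<^sub>R D) / norm (y - a) = norm ((F y - F a) /\<^sub>R (y - a) - D)"
  proof (rule eventually_at_filter[THEN iffD2], intro always_eventually allI impI)
    fix y assume "y \<noteq> a"
    then have ne: "y - a \<noteq> 0" by auto
    have "(y - a) *\<^sub>R ((F y - F a) /\<^sub>R (y - a) - D) = F y - F a - (y - a) *\<^sub>R D"
      using ne by (simp add: scaleR_right_diff_distrib)
    then have "F y - F a - (y - a) *\<^sub>R D = (y - a) *\<^sub>R ((F y - F a) /\<^sub>R (y - a) - D)" by simp
    then show "norm (F y - F a - (y - a) *\<^sub>R D) / norm (y - a) = norm ((F y - F a) /\<^sub>R (y - a) - D)"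
      using ne by simp
  qed
  have "(F has_vector_derivative D) (at a) \<longleftrightarrow> ((\<lambda>y. norm ((F y - F a) /\<^sub>R (y - a) - D)) \<longlongrightarrow> 0) (at a)"
    unfolding has_vector_derivative_def has_derivative_iff_norm using bl tendsto_cong[OF ev] by simp
  also have "\<dots> \<longleftrightarrow> ((\<lambda>y. (F y - F a) /\<^sub>R (y - a)) \<longlongrightarrow> D) (at a)"
    by (simp add: tendsto_norm_zero_iff LIM_zero_iff)
  finally show ?thesis .
qed

lemma deriv_int:
  fixes f :: "real \<Rightarrow> 'a \<Rightarrow> complex" and f' :: "'a \<Rightarrow> complex" and G :: "'a \<Rightarrow> real"
  assumes meas: "\<And>l. f l \<in> borel_measurable M"
    and intf: "integrable M (f lam)"
    and f'm: "f' \<in> borel_measurable M"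
    and r: "r > 0"
    and der: "\<And>x. x \<in> space M \<Longrightarrow> ((\<lambda>l. f l x) has_vector_derivative f' x) (at lam)"
    and G: "integrable M G"
    and bnd: "\<And>l x. x \<in> space M \<Longrightarrow> \<bar>l - lam\<bar> < r \<Longrightarrow> norm (f l x - f lam x) \<le> \<bar>l - lam\<bar> * G x"
  shows "((\<lambda>l. \<integral>x. f l x \<partial>M) has_vector_derivative (\<integral>x. f' x \<partial>M)) (at lam)"
proof -
  have intd: "integrable M (\<lambda>x. f l x - f lam x)" if "\<bar>l - lam\<bar> < r" for l
  proof (rule Bochner_Integration.integrable_bound[where f="\<lambda>x. \<bar>l - lam\<bar> * G x"])
    show "integrable M (\<lambda>x. \<bar>l - lam\<bar> * G x)" using G by simp
    show "(\<lambda>x. f l x - f lam x) \<in> borel_measurable M" using meas by measurable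
    show "AE x in M. norm (f l x - f lam x) \<le> norm (\<bar>l - lam\<bar> * G x)"
      using bnd[OF _ that] by (intro AE_I2) (metis abs_ge_self order_trans real_norm_def)
  qed
  have intl: "integrable M (f l)" if "\<bar>l - lam\<bar> < r" for l
  proof -
    have "integrable M (\<lambda>x. (f l x - f lam x) + f lam x)"
      using intd[OF that] intf by (rule Bochner_Integration.integrable_add)
    then show ?thesis by simp
  qed
  define q where "q l x = (f l x - f lam x) /\<^sub>R (l - lam)" for l x
  show ?thesis unfolding hvd_iff
  proof (subst tendsto_at_iff_sequentially, intro allI impI)
    fix X :: "nat \<Rightarrow> real"
    assume X: "\<forall>i. X i \<in> UNIV - {lam}" and Xl: "X \<longlonglongrightarrow> lam"
    have "\<forall>\<^sub>F n in sequentially. dist (X n) lam < r" using Xl r by (rule tendstoD)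
    then obtain N where N: "\<And>n. n \<ge> N \<Longrightarrow> \<bar>X n - lam\<bar> < r"
      unfolding eventually_sequentially dist_real_def by auto
    let ?Y = "\<lambda>n. X (n + N)"
    have Yl: "?Y \<longlonglongrightarrow> lam" using Xl by (rule LIMSEQ_ignore_initial_segment)
    have Yne: "?Y n \<noteq> lam" for n using X by auto
    have YN: "\<bar>?Y n - lam\<bar> < r" for n using N by auto
    have eq: "((\<lambda>l. ((\<integral>x. f l x \<partial>M) - (\<integral>x. f lam x \<partial>M)) /\<^sub>R (l - lam)) \<circ> X) (n + N) = (\<integral>x. q (?Y n) x \<partial>M)" for n
      unfolding q_def comp_def
      using intl[OF YN[of n]] intf by (simp add: integral_diff)
    have "(\<lambda>n. \<integral>x. q (?Y n) x \<partial>M) \<longlonglongrightarrow> (\<integral>x. f' x \<partial>M)"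
    proof (rule integral_dominated_convergence[where w=G])
      show "f' \<in> borel_measurable M" by fact
      show "(\<lambda>x. q (?Y n) x) \<in> borel_measurable M" for n unfolding q_def using meas by measurable
      show "integrable M G" by fact
      show "AE x in M. (\<lambda>n. q (?Y n) x) \<longlonglongrightarrow> f' x"
      proof (rule AE_I2)
        fix x assume x: "x \<in> space M"
        have "((\<lambda>l. (f l x - f lam x) /\<^sub>R (l - lam)) \<longlongrightarrow> f' x) (at lam)"
          using der[OF x] unfolding hvd_iff .
        then have "((\<lambda>l. (f l x - f lam x) /\<^sub>R (l - lam)) \<circ> ?Y) \<longlonglongrightarrow> f' x"
          unfolding tendsto_at_iff_sequentially using Yne Yl by auto
        then show "(\<lambda>n. q (?Y n) x) \<longlonglongrightarrow> f' x" unfolding q_def comp_def .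
      qed
      show "AE x in M. norm (q (?Y n) x) \<le> G x" for n
      proof (rule AE_I2)
        fix x assume x: "x \<in> space M"
        have ne: "\<bar>?Y n - lam\<bar> > 0" using Yne[of n] by simp
        have "norm (q (?Y n) x) = norm (f (?Y n) x - f lam x) / \<bar>?Y n - lam\<bar>"
          unfolding q_def by (simp add: divide_inverse mult.commute)
        also have "\<dots> \<le> \<bar>?Y n - lam\<bar> * G x / \<bar>?Y n - lam\<bar>"
          using bnd[OF x YN[of n]] ne by (intro divide_right_mono) auto
        also have "\<dots> = G x" using ne by simp
        finally show "norm (q (?Y n) x) \<le> G x" .
      qed
    qed
    then have "(\<lambda>n. ((\<lambda>l. ((\<integral>x. f l x \<partial>M) - (\<integral>x. f lam x \<partial>M)) /\<^sub>R (l - lam)) \<circ> X) (n + N)) \<longlonglongrightarrow> (\<integral>x. f' x \<partial>M)"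
      unfolding eq .
    then show "((\<lambda>l. ((\<integral>x. f l x \<partial>M) - (\<integral>x. f lam x \<partial>M)) /\<^sub>R (l - lam)) \<circ> X) \<longlonglongrightarrow> (\<integral>x. f' x \<partial>M)"
      by (rule LIMSEQ_offset)
  qed
qed

lemma c_meas[measurable]: "c1 \<in> borel_measurable borel" "c2 \<in> borel_measurable borel"
  "c3 \<in> borel_measurable borel" "c4 \<in> borel_measurable borel"
  unfolding c1_def[abs_def] c2_def[abs_def] c3_def[abs_def] c4_def[abs_def]
  by (intro borel_measurable_continuous_onI continuous_intros)+

lemma mono_bounds:
  fixes x :: "real \<times> real \<times> real \<times> real"
  defines "n \<equiv> 1 + norm x"
  shows "\<bar>c2 x\<bar> \<le> n^3" "\<bar>c3 x\<bar> \<le> n^3" "\<bar>c4 x\<bar> \<le> n^3"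
    "\<bar>c3 x * c1 x\<bar> \<le> n^3" "\<bar>c2 x * c1 x\<bar> \<le> n^3" "\<bar>c2 x * (c1 x)^2\<bar> \<le> n^3"
    "\<bar>1::real\<bar> \<le> n^3"
proof -
  have n1: "1 \<le> n" unfolding n_def by simp
  have le: "\<bar>c1 x\<bar> \<le> n" "\<bar>c2 x\<bar> \<le> n" "\<bar>c3 x\<bar> \<le> n" "\<bar>c4 x\<bar> \<le> n"
    using c_le[of x] unfolding n_def by auto
  have p: "n \<le> n^3" "n^2 \<le> n^3" "1 \<le> n^3"
    using power_increasing[of 1 3 n] power_increasing[of 2 3 n] one_le_power[of n 3] n1 by auto
  have m2: "\<bar>a * b\<bar> \<le> n^2" if "\<bar>a\<bar> \<le> n" "\<bar>b\<bar> \<le> n" for a b :: real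
    using mult_mono[OF that] n1 by (simp add: abs_mult power2_eq_square)
  have m3: "\<bar>a * b^2\<bar> \<le> n^3" if "\<bar>a\<bar> \<le> n" "\<bar>b\<bar> \<le> n" for a b :: real
  proof -
    have "\<bar>b^2\<bar> \<le> n^2" using m2[OF that(2) that(2)] by (simp add: power2_eq_square)
    then have "\<bar>a\<bar> * \<bar>b^2\<bar> \<le> n * n^2" using that(1) by (intro mult_mono) auto
    then show ?thesis by (simp add: abs_mult power3_eq_cube power2_eq_square)
  qed
  show "\<bar>c2 x\<bar> \<le> n^3" using le(2) p(1) by (rule order_trans)
  show "\<bar>c3 x\<bar> \<le> n^3" using le(3) p(1) by (rule order_trans)
  show "\<bar>c4 x\<bar> \<le> n^3" using le(4) p(1) by (rule order_trans)
  show "\<bar>c3 x * c1 x\<bar> \<le> n^3" using m2[OF le(3) le(1)] p(2) by (rule order_trans)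
  show "\<bar>c2 x * c1 x\<bar> \<le> n^3" using m2[OF le(2) le(1)] p(2) by (rule order_trans)
  show "\<bar>c2 x * (c1 x)^2\<bar> \<le> n^3" using m3[OF le(2) le(1)] .
  show "\<bar>1::real\<bar> \<le> n^3" using p by simp
qed

lemma iexp_lip: "cmod (iexp a - iexp b) \<le> \<bar>a - b\<bar>"
proof -
  have "iexp a - iexp b = iexp b * (iexp (a - b) - 1)"
    by (simp add: algebra_simps exp_add[symmetric] diff_divide_distrib)
  then have "cmod (iexp a - iexp b) = cmod (iexp (a - b) - 1)"
    by (simp add: norm_mult)
  also have "\<dots> \<le> \<bar>a - b\<bar>" using iexp_approx1[of "a - b" 0] by simp
  finally show ?thesis .
qed

lemma abs7: "\<bar>a - b + c - d - e + f - g\<bar> \<le> \<bar>a\<bar> + \<bar>b\<bar> + \<bar>c\<bar> + \<bar>d\<bar> + \<bar>e\<bar> + \<bar>f\<bar> + \<bar>g\<bar>"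
  for a b c d e f g :: real
  by linarith

lemma abs7': "\<bar>a - b + c - d - e + f - g\<bar> \<le> \<bar>a\<bar> + \<bar>b\<bar> + \<bar>c\<bar> + \<bar>d\<bar> + \<bar>e\<bar> + \<bar>f\<bar> + \<bar>g\<bar>"
  for a b c d e f g :: real
proof -
  have "\<bar>a - b + c - d - e + f - g\<bar> \<le> \<bar>a - b + c - d - e + f\<bar> + \<bar>g\<bar>" by (rule abs_triangle_ineq4)
  also have "\<bar>a - b + c - d - e + f\<bar> \<le> \<bar>a - b + c - d - e\<bar> + \<bar>f\<bar>" by (rule abs_triangle_ineq)
  also have "\<bar>a - b + c - d - e\<bar> \<le> \<bar>a - b + c - d\<bar> + \<bar>e\<bar>" by (rule abs_triangle_ineq4)
  also have "\<bar>a - b + c - d\<bar> \<le> \<bar>a - b + c\<bar> + \<bar>d\<bar>" by (rule abs_triangle_ineq4)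
  also have "\<bar>a - b + c\<bar> \<le> \<bar>a - b\<bar> + \<bar>c\<bar>" by (rule abs_triangle_ineq)
  also have "\<bar>a - b\<bar> \<le> \<bar>a\<bar> + \<bar>b\<bar>" by (rule abs_triangle_ineq4)
  finally show ?thesis by simp
qed

theorem mainTheorem4:
  fixes kappa :: "real \<times> real \<times> real \<times> real \<Rightarrow> complex"
    and h :: "real \<Rightarrow> complex"
    and lam mu u :: real
  assumes "schwartz kappa" and "schwartz h" and "lam \<noteq> 0"
  shows "(\<lambda>l. piF l mu kappa h u) differentiable (at lam) \<and>
    piF lam mu (\<lambda>x. complex_of_real (c4 x) * kappa x) h u =
        \<i> * vector_derivative (\<lambda>l. piF l mu kappa h u) (at lam)
      - complex_of_real (mu / (2 * lam^2) + u^2 / 2)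
          * piF lam mu (\<lambda>x. complex_of_real (c2 x) * kappa x) h u
      + complex_of_real u * piF lam mu (\<lambda>x. complex_of_real (c3 x) * kappa x) h u
      - piF lam mu (\<lambda>x. complex_of_real (c3 x * c1 x) * kappa x) h u
      + complex_of_real u * piF lam mu (\<lambda>x. complex_of_real (c2 x * c1 x) * kappa x) h u
      - piF lam mu (\<lambda>x. complex_of_real (c2 x * (c1 x)^2) * kappa x) h u / 2"
proof -
  define phi where "phi l x = mu / (2 * l) * c2 x - l * c4 x + l * c3 x * (u - c1 x) - l / 2 * c2 x * (u - c1 x)^2" for l x
  define E where "E l x = iexp (phi l x)" for l x
  define H where "H x = h (u - c1 x)" for x
  have pf: "piF l mu g h u = (\<integral>x. g x * E l x * H x \<partial>lborel)" for l g
    unfolding piF_def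
    by (rule Bochner_Integration.integral_cong)
       (auto simp: E_def phi_def H_def c1_def c2_def c3_def c4_def split: prod.splits)
  note km[measurable] = schwartz_meas[OF assms(1)]
  note hm[measurable] = schwartz_meas[OF assms(2)]
  obtain Hb where Hb: "\<And>y. norm (h y) \<le> Hb" using schwartz_bound[OF assms(2), of 0] by auto
  have Hm[measurable]: "(\<lambda>x. H x) \<in> borel_measurable lborel" unfolding H_def by measurable
  have Em[measurable]: "(\<lambda>x. E l x) \<in> borel_measurable lborel" for l unfolding E_def phi_def by measurable
  have nE: "norm (E l x) = 1" for l x unfolding E_def by simp
  have nH: "norm (H x) \<le> Hb" for x unfolding H_def by (rule Hb)
  have MI: "integrable lborel (\<lambda>x. complex_of_real (m x) * kappa x * E l x * H x)"
    if mm: "m \<in> borel_measurable borel" and mb: "\<And>x. \<bar>m x\<bar> \<le> (1 + norm x)^3" for m l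
  proof (rule int_poly[OF assms(1), where C=Hb])
    note mm[measurable]
    show "(\<lambda>x. complex_of_real (m x) * kappa x * E l x * H x) \<in> borel_measurable lborel" by measurable
    fix x
    have "norm (complex_of_real (m x) * kappa x * E l x * H x) = \<bar>m x\<bar> * norm (kappa x) * norm (H x)"
      by (simp add: norm_mult nE)
    also have "\<dots> \<le> (1 + norm x)^3 * norm (kappa x) * Hb"
      using mb[of x] nH[of x] by (intro mult_mono) auto
    finally show "norm (complex_of_real (m x) * kappa x * E l x * H x) \<le> Hb * (1 + norm x)^3 * norm (kappa x)"
      by (simp add: mult_ac)
  qed
  have MK: "integrable lborel (\<lambda>x. complex_of_real (m x) * kappa x)"
    if mm: "m \<in> borel_measurable borel" and mb: "\<And>x. \<bar>m x\<bar> \<le> (1 + norm x)^3" for m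
  proof (rule int_poly[OF assms(1), where C=1])
    note mm[measurable]
    show "(\<lambda>x. complex_of_real (m x) * kappa x) \<in> borel_measurable lborel" by measurable
    fix x
    show "norm (complex_of_real (m x) * kappa x) \<le> 1 * (1 + norm x)^3 * norm (kappa x)"
      using mb[of x] by (simp add: norm_mult mult_right_mono)
  qed
  have cm: "(\<lambda>x. c3 x * c1 x) \<in> borel_measurable borel" "(\<lambda>x. c2 x * c1 x) \<in> borel_measurable borel"
    "(\<lambda>x. c2 x * (c1 x)^2) \<in> borel_measurable borel" "(\<lambda>x. 1::real) \<in> borel_measurable borel"
    by measurable
  note mb = mono_bounds
  have I0: "integrable lborel (\<lambda>x. kappa x * E l x * H x)" for l
    using MI[OF cm(4) mb(7)] by simp
  have I2: "integrable lborel (\<lambda>x. complex_of_real (c2 x) * kappa x * E l x * H x)" for l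
    using MI[OF c_meas(2) mb(1)] .
  have I3: "integrable lborel (\<lambda>x. complex_of_real (c3 x) * kappa x * E l x * H x)" for l
    using MI[OF c_meas(3) mb(2)] .
  have I4: "integrable lborel (\<lambda>x. complex_of_real (c4 x) * kappa x * E l x * H x)" for l
    using MI[OF c_meas(4) mb(3)] .
  have I31: "integrable lborel (\<lambda>x. complex_of_real (c3 x * c1 x) * kappa x * E l x * H x)" for l
    using MI[OF cm(1) mb(4)] .
  have I21: "integrable lborel (\<lambda>x. complex_of_real (c2 x * c1 x) * kappa x * E l x * H x)" for l
    using MI[OF cm(2) mb(5)] .
  have I211: "integrable lborel (\<lambda>x. complex_of_real (c2 x * (c1 x)^2) * kappa x * E l x * H x)" for l
    using MI[OF cm(3) mb(6)] .
  have K2: "integrable lborel (\<lambda>x. complex_of_real (c2 x) * kappa x)" using MK[OF c_meas(2) mb(1)] .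
  have K3: "integrable lborel (\<lambda>x. complex_of_real (c3 x) * kappa x)" using MK[OF c_meas(3) mb(2)] .
  have K4: "integrable lborel (\<lambda>x. complex_of_real (c4 x) * kappa x)" using MK[OF c_meas(4) mb(3)] .
  have K31: "integrable lborel (\<lambda>x. complex_of_real (c3 x * c1 x) * kappa x)" using MK[OF cm(1) mb(4)] .
  have K21: "integrable lborel (\<lambda>x. complex_of_real (c2 x * c1 x) * kappa x)" using MK[OF cm(2) mb(5)] .
  have K211: "integrable lborel (\<lambda>x. complex_of_real (c2 x * (c1 x)^2) * kappa x)" using MK[OF cm(3) mb(6)] .

  define dphi where "dphi x = - mu / (2 * lam^2) * c2 x - c4 x + c3 x * (u - c1 x) - 1/2 * c2 x * (u - c1 x)^2" for x
  define f' where "f' x = kappa x * (\<i> * complex_of_real (dphi x) * E lam x) * H x" for x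
  have der: "((\<lambda>l. kappa x * E l x * H x) has_vector_derivative f' x) (at lam)" for x
  proof -
    have "((\<lambda>l. phi l x) has_real_derivative dphi x) (at lam)"
      unfolding phi_def dphi_def using assms(3)
      by (auto intro!: derivative_eq_intros simp: field_simps power2_eq_square)
    then have d1: "((\<lambda>l. phi l x) has_vector_derivative dphi x) (at lam)"
      by (simp add: has_real_derivative_iff_has_vector_derivative)
    have d2: "((iexp \<circ> (\<lambda>l. phi l x)) has_vector_derivative (dphi x *\<^sub>R (\<i> * iexp (phi lam x)))) (at lam)"
      by (rule vector_diff_chain_at[OF d1 has_vector_derivative_iexp])
    have "((\<lambda>l. kappa x * (iexp \<circ> (\<lambda>l. phi l x)) l * H x) has_vector_derivative
           kappa x * (dphi x *\<^sub>R (\<i> * iexp (phi lam x))) * H x) (at lam)"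
      by (intro has_vector_derivative_mult_right has_vector_derivative_mult_left d2)
    then show ?thesis
      by (simp add: f'_def E_def comp_def scaleR_conv_of_real mult_ac)
  qed
  define Q where "Q x = \<bar>mu\<bar> / lam^2 * \<bar>c2 x\<bar> + \<bar>c4 x\<bar> + \<bar>u\<bar> * \<bar>c3 x\<bar> + \<bar>c3 x * c1 x\<bar>
      + u^2/2 * \<bar>c2 x\<bar> + \<bar>u\<bar> * \<bar>c2 x * c1 x\<bar> + 1/2 * \<bar>c2 x * (c1 x)^2\<bar>" for x
  define G where "G x = Hb * (norm (kappa x) * Q x)" for x
  have Gint: "integrable lborel G"
  proof -
    have "integrable lborel (\<lambda>x. Hb * (\<bar>mu\<bar> / lam^2 * norm (complex_of_real (c2 x) * kappa x)
      + norm (complex_of_real (c4 x) * kappa x) + \<bar>u\<bar> * norm (complex_of_real (c3 x) * kappa x)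
      + norm (complex_of_real (c3 x * c1 x) * kappa x) + u^2/2 * norm (complex_of_real (c2 x) * kappa x)
      + \<bar>u\<bar> * norm (complex_of_real (c2 x * c1 x) * kappa x)
      + 1/2 * norm (complex_of_real (c2 x * (c1 x)^2) * kappa x)))"
      using K2 K3 K4 K31 K21 K211
      by (intro integrable_mult_right Bochner_Integration.integrable_add integrable_norm) auto
    moreover have "(\<lambda>x. Hb * (\<bar>mu\<bar> / lam^2 * norm (complex_of_real (c2 x) * kappa x)
      + norm (complex_of_real (c4 x) * kappa x) + \<bar>u\<bar> * norm (complex_of_real (c3 x) * kappa x)
      + norm (complex_of_real (c3 x * c1 x) * kappa x) + u^2/2 * norm (complex_of_real (c2 x) * kappa x)
      + \<bar>u\<bar> * norm (complex_of_real (c2 x * c1 x) * kappa x)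
      + 1/2 * norm (complex_of_real (c2 x * (c1 x)^2) * kappa x))) = G"
      by (rule ext) (simp add: G_def Q_def norm_mult abs_mult norm_power power2_abs algebra_simps)
    ultimately show ?thesis by (simp only:)
  qed
  have Qnn: "0 \<le> Q x" for x unfolding Q_def
    by (intro add_nonneg_nonneg mult_nonneg_nonneg divide_nonneg_nonneg) auto
  have bnd: "norm (kappa x * E l x * H x - kappa x * E lam x * H x) \<le> \<bar>l - lam\<bar> * G x"
    if lr: "\<bar>l - lam\<bar> < \<bar>lam\<bar> / 2" for l x
  proof -
    have l0: "l \<noteq> 0" using lr by auto
    have llam: "\<bar>lam\<bar> \<le> 2 * \<bar>l\<bar>" using lr by linarith
    define psi where "psi = - mu / (2 * l * lam) * c2 x - c4 x + c3 x * (u - c1 x) - 1/2 * c2 x * (u - c1 x)^2"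
    have phid: "phi l x - phi lam x = (l - lam) * psi"
      unfolding phi_def psi_def using l0 assms(3) by (simp add: field_simps)
    have psi_eq: "psi = - mu / (2 * l * lam) * c2 x - c4 x + u * c3 x - c3 x * c1 x - u^2/2 * c2 x
         + u * (c2 x * c1 x) - 1/2 * (c2 x * (c1 x)^2)"
      unfolding psi_def by (simp add: algebra_simps power2_eq_square)
    have tA: "\<bar>- mu / (2 * l * lam) * c2 x\<bar> \<le> \<bar>mu\<bar> / lam^2 * \<bar>c2 x\<bar>"
    proof -
      have "\<bar>lam\<bar> * \<bar>lam\<bar> \<le> (2 * \<bar>l\<bar>) * \<bar>lam\<bar>" using llam by (rule mult_right_mono) simp
      then have den: "lam^2 \<le> 2 * \<bar>l\<bar> * \<bar>lam\<bar>" by (simp add: power2_eq_square)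
      have "\<bar>- mu / (2 * l * lam) * c2 x\<bar> = (\<bar>mu\<bar> * \<bar>c2 x\<bar>) / (2 * \<bar>l\<bar> * \<bar>lam\<bar>)"
        by (simp add: abs_mult abs_divide)
      also have "\<dots> \<le> (\<bar>mu\<bar> * \<bar>c2 x\<bar>) / lam^2"
        using den assms(3) l0 by (intro divide_left_mono) auto
      finally show ?thesis by simp
    qed
    have psib: "\<bar>psi\<bar> \<le> Q x"
    proof -
      have "\<bar>psi\<bar> \<le> \<bar>- mu / (2 * l * lam) * c2 x\<bar> + \<bar>c4 x\<bar> + \<bar>u * c3 x\<bar> + \<bar>c3 x * c1 x\<bar> + \<bar>u^2/2 * c2 x\<bar>
         + \<bar>u * (c2 x * c1 x)\<bar> + \<bar>1/2 * (c2 x * (c1 x)^2)\<bar>"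
        unfolding psi_eq by (rule abs7)
      then show ?thesis unfolding Q_def using tA by (simp add: abs_mult)
    qed
    have "kappa x * E l x * H x - kappa x * E lam x * H x = kappa x * (E l x - E lam x) * H x"
      by (simp add: algebra_simps)
    then have "norm (kappa x * E l x * H x - kappa x * E lam x * H x) = norm (kappa x) * norm (E l x - E lam x) * norm (H x)"
      by (simp add: norm_mult)
    also have "\<dots> \<le> norm (kappa x) * (\<bar>l - lam\<bar> * Q x) * Hb"
    proof (intro mult_mono)
      have "norm (E l x - E lam x) \<le> \<bar>phi l x - phi lam x\<bar>" unfolding E_def by (rule iexp_lip)
      also have "\<dots> = \<bar>l - lam\<bar> * \<bar>psi\<bar>" unfolding phid by (simp add: abs_mult)
      also have "\<dots> \<le> \<bar>l - lam\<bar> * Q x" using psib by (intro mult_left_mono) auto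
      finally show "norm (E l x - E lam x) \<le> \<bar>l - lam\<bar> * Q x" .
    qed (auto simp: nH Qnn)
    also have "\<dots> = \<bar>l - lam\<bar> * G x" by (simp add: G_def mult_ac)
    finally show ?thesis .
  qed
  have D: "((\<lambda>l. \<integral>x. kappa x * E l x * H x \<partial>lborel) has_vector_derivative (\<integral>x. f' x \<partial>lborel)) (at lam)"
  proof (rule deriv_int[where f="\<lambda>l x. kappa x * E l x * H x" and f'=f' and r="\<bar>lam\<bar>/2" and G=G])
    show "(\<lambda>x. kappa x * E l x * H x) \<in> borel_measurable lborel" for l by measurable
    show "integrable lborel (\<lambda>x. kappa x * E lam x * H x)" by (rule I0)
    show "f' \<in> borel_measurable lborel" unfolding f'_def[abs_def] dphi_def by measurable
    show "\<bar>lam\<bar>/2 > 0" using assms(3) by simp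
    show "((\<lambda>l. kappa x * E l x * H x) has_vector_derivative f' x) (at lam)" for x by (rule der)
    show "integrable lborel G" by (rule Gint)
    show "norm (kappa x * E l x * H x - kappa x * E lam x * H x) \<le> \<bar>l - lam\<bar> * G x"
      if "\<bar>l - lam\<bar> < \<bar>lam\<bar>/2" for l x using bnd[OF that] .
  qed
  have Peq: "(\<lambda>l. piF l mu kappa h u) = (\<lambda>l. \<integral>x. kappa x * E l x * H x \<partial>lborel)"
    using pf[of _ kappa] by auto
  have diff: "(\<lambda>l. piF l mu kappa h u) differentiable (at lam)"
    unfolding Peq using D by (rule differentiableI_vector)
  have vd: "vector_derivative (\<lambda>l. piF l mu kappa h u) (at lam) = (\<integral>x. f' x \<partial>lborel)"
    unfolding Peq using D by (rule vector_derivative_at)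
  define g2 where "g2 x = complex_of_real (c2 x) * kappa x * E lam x * H x" for x
  define g3 where "g3 x = complex_of_real (c3 x) * kappa x * E lam x * H x" for x
  define g4 where "g4 x = complex_of_real (c4 x) * kappa x * E lam x * H x" for x
  define g31 where "g31 x = complex_of_real (c3 x * c1 x) * kappa x * E lam x * H x" for x
  define g21 where "g21 x = complex_of_real (c2 x * c1 x) * kappa x * E lam x * H x" for x
  define g211 where "g211 x = complex_of_real (c2 x * (c1 x)^2) * kappa x * E lam x * H x" for x
  have f'eq: "f' x = \<i> * (- complex_of_real (mu / (2 * lam^2)) * g2 x - g4 x + complex_of_real u * g3 x - g31 x
      - complex_of_real (u^2/2) * g2 x + complex_of_real u * g21 x - 1/2 * g211 x)" for x
    unfolding f'_def dphi_def g2_def g3_def g4_def g31_def g21_def g211_def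
    by (simp add: algebra_simps power2_eq_square)
  have J: "integrable lborel g2" "integrable lborel g3" "integrable lborel g4" "integrable lborel g31"
     "integrable lborel g21" "integrable lborel g211"
    unfolding g2_def[abs_def] g3_def[abs_def] g4_def[abs_def] g31_def[abs_def] g21_def[abs_def] g211_def[abs_def]
    by (rule I2 I3 I4 I31 I21 I211)+
  have If': "(\<integral>x. f' x \<partial>lborel) = \<i> * (- complex_of_real (mu / (2 * lam^2)) * integral\<^sup>L lborel g2
      - integral\<^sup>L lborel g4 + complex_of_real u * integral\<^sup>L lborel g3 - integral\<^sup>L lborel g31
      - complex_of_real (u^2/2) * integral\<^sup>L lborel g2 + complex_of_real u * integral\<^sup>L lborel g21
      - 1/2 * integral\<^sup>L lborel g211)"
    unfolding f'eq using J by simp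
  have P: "piF lam mu (\<lambda>x. complex_of_real (c2 x) * kappa x) h u = integral\<^sup>L lborel g2"
    "piF lam mu (\<lambda>x. complex_of_real (c3 x) * kappa x) h u = integral\<^sup>L lborel g3"
    "piF lam mu (\<lambda>x. complex_of_real (c4 x) * kappa x) h u = integral\<^sup>L lborel g4"
    "piF lam mu (\<lambda>x. complex_of_real (c3 x * c1 x) * kappa x) h u = integral\<^sup>L lborel g31"
    "piF lam mu (\<lambda>x. complex_of_real (c2 x * c1 x) * kappa x) h u = integral\<^sup>L lborel g21"
    "piF lam mu (\<lambda>x. complex_of_real (c2 x * (c1 x)^2) * kappa x) h u = integral\<^sup>L lborel g211"
    unfolding pf g2_def[abs_def] g3_def[abs_def] g4_def[abs_def] g31_def[abs_def] g21_def[abs_def] g211_def[abs_def]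
    by (rule refl)+
  show ?thesis
    unfolding P vd If' using diff by (simp add: algebra_simps)
qed
end
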